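(* Assume $r=1$, $\gamma\neq 0$, $o(s)=n<\infty$, and that the polynomial $\psi$ is a nonzero constant $C$ (equivalently $\phi=(s-1)C$). If $M$ is a simple $L$-module on which $H^n$ acts as the scalar $C^n$, then $\operatorname{ann}M$ contains $u^n$ or $d^n$.
   Context: Let $s,\gamma\in\mathbb C$, $s\neq0$, $\gamma\neq 0$, $\phi\in\mathbb C[x]$, and let $L=L(\phi,1,s,\gamma)$ be the associative $\mathbb C$-algebra generated by $u,d,h$ subject to $hu-uh=\gamma u$, $dh-hd=\gamma d$, $du-sud=\phi(h)$. Fix $\psi\in\mathbb C[x]$ with $s\psi(x)-\psi(x+\gamma)=\phi(x)$ (such $\psi$ exists) and set $H=ud+\psi(h)\in L$; then $Hu=suH$ and $dH=sHd$. For $z\in\mathbb C^\times$, $o(z)$ denotes its multiplicative order. Modules are left modules. *)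

theory Defs
  imports Main "HOL-Computational_Algebra.Polynomial"
begin

text \<open>A module over L(phi,1,s,gamma) is a complex vector space (given by its
scalar multiplication sc) together with linear endomorphisms U, D, Hh
(actions of u, d, h) satisfying the defining relations of L.\<close>

definition op_poly :: "(complex \<Rightarrow> 'v \<Rightarrow> 'v) \<Rightarrow> complex poly \<Rightarrow> ('v \<Rightarrow> 'v) \<Rightarrow> 'v \<Rightarrow> 'v::ab_group_add"
  where "op_poly sc p T = (\<lambda>v. \<Sum>i\<le>degree p. sc (coeff p i) ((T ^^ i) v))"

definition L_module ::
  "(complex \<Rightarrow> 'v \<Rightarrow> 'v::ab_group_add) \<Rightarrow> complex poly \<Rightarrow> complex \<Rightarrow> complex
    \<Rightarrow> ('v \<Rightarrow> 'v) \<Rightarrow> ('v \<Rightarrow> 'v) \<Rightarrow> ('v \<Rightarrow> 'v) \<Rightarrow> bool" where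
  "L_module sc phi s \<gamma> U D Hh \<longleftrightarrow>
     vector_space sc \<and>
     Vector_Spaces.linear sc sc U \<and> Vector_Spaces.linear sc sc D \<and> Vector_Spaces.linear sc sc Hh \<and>
     (\<forall>v. Hh (U v) - U (Hh v) = sc \<gamma> (U v)) \<and>
     (\<forall>v. D (Hh v) - Hh (D v) = sc \<gamma> (D v)) \<and>
     (\<forall>v. D (U v) - sc s (U (D v)) = op_poly sc phi Hh v)"

definition simple_L_module ::
  "(complex \<Rightarrow> 'v \<Rightarrow> 'v::ab_group_add) \<Rightarrow> complex poly \<Rightarrow> complex \<Rightarrow> complex
    \<Rightarrow> ('v \<Rightarrow> 'v) \<Rightarrow> ('v \<Rightarrow> 'v) \<Rightarrow> ('v \<Rightarrow> 'v) \<Rightarrow> bool" where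
  "simple_L_module sc phi s \<gamma> U D Hh \<longleftrightarrow>
     L_module sc phi s \<gamma> U D Hh \<and> (UNIV :: 'v set) \<noteq> {0} \<and>
     (\<forall>W. module.subspace sc W \<and> U ` W \<subseteq> W \<and> D ` W \<subseteq> W \<and> Hh ` W \<subseteq> W
          \<longrightarrow> W = {0} \<or> W = UNIV)"

definition mult_order_is :: "complex \<Rightarrow> nat \<Rightarrow> bool" where
  "mult_order_is z n \<longleftrightarrow> 0 < n \<and> z ^ n = 1 \<and> (\<forall>k. 0 < k \<and> k < n \<longrightarrow> z ^ k \<noteq> 1)"

end

theory Submission
  imports Defs
begin

definition lin :: "('a::field \<Rightarrow> 'v \<Rightarrow> 'v::ab_group_add) \<Rightarrow> ('v \<Rightarrow> 'v) \<Rightarrow> bool" where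
  "lin sc f \<longleftrightarrow> (\<forall>x y. f (x + y) = f x + f y) \<and> (\<forall>c x. f (sc c x) = sc c (f x))"

context vector_space begin

lemma lin_add: "lin scale f \<Longrightarrow> f (x + y) = f x + f y" by (simp add: lin_def)
lemma lin_sc: "lin scale f \<Longrightarrow> f (scale c x) = scale c (f x)" by (simp add: lin_def)
lemma lin_zero: "lin scale f \<Longrightarrow> f 0 = 0"
  by (metis lin_sc scale_zero_left)
lemma lin_diff: "lin scale f \<Longrightarrow> f (x - y) = f x - f y"
proof -
  assume l: "lin scale f"
  have "f (x - y) + f y = f x" using lin_add[OF l, of "x - y" y] by simp
  thus ?thesis by (simp add: eq_diff_eq)
qed
lemma lin_sum: "lin scale f \<Longrightarrow> f (sum g A) = (\<Sum>a\<in>A. f (g a))"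
  by (induct A rule: infinite_finite_induct) (simp_all add: lin_zero lin_add)
lemma lin_funpow: "lin scale f \<Longrightarrow> lin scale (f ^^ k)"
  by (induct k) (simp_all add: lin_def)

end

locale Lm = vector_space sc for sc :: "complex \<Rightarrow> 'v::ab_group_add \<Rightarrow> 'v" +
  fixes U D Hh :: "'v \<Rightarrow> 'v" and s \<gamma> C :: complex and n :: nat
  assumes lU: "lin sc U" and lD: "lin sc D" and lH: "lin sc Hh"
    and hu: "\<And>v. Hh (U v) - U (Hh v) = sc \<gamma> (U v)"
    and du: "\<And>v. D (U v) = sc s (U (D v)) + sc ((s - 1) * C) v"
    and s_nz: "s \<noteq> 0" and C_nz: "C \<noteq> 0" and npos: "0 < n" and sn: "s ^ n = 1"
    and ord: "\<And>k. 0 < k \<Longrightarrow> k < n \<Longrightarrow> s ^ k \<noteq> 1"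
    and Hn0: "\<And>v. ((\<lambda>v. U (D v) + sc C v) ^^ n) v = sc (C ^ n) v"
    and simple: "\<And>W. subspace W \<Longrightarrow> U ` W \<subseteq> W \<Longrightarrow> D ` W \<subseteq> W \<Longrightarrow> Hh ` W \<subseteq> W
          \<Longrightarrow> W = {0} \<or> W = UNIV"
begin

definition Hop where "Hop v = U (D v) + sc C v"

lemma Hn: "(Hop ^^ n) v = sc (C ^ n) v"
proof -
  have "Hop = (\<lambda>v. U (D v) + sc C v)" by (rule ext) (simp add: Hop_def)
  thus ?thesis using Hn0 by simp
qed

lemma lHop: "lin sc Hop"
  unfolding lin_def Hop_def
proof (intro conjI allI)
  fix x y show "U (D (x + y)) + sc C (x + y) = U (D x) + sc C x + (U (D y) + sc C y)"
    using lin_add[OF lU] lin_add[OF lD] by (simp add: scale_right_distrib ac_simps)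
next
  fix c x show "U (D (sc c x)) + sc C (sc c x) = sc c (U (D x) + sc C x)"
    using lin_sc[OF lU] lin_sc[OF lD] by (simp add: scale_right_distrib mult.commute)
qed

lemma DUk: "D ((U ^^ Suc k) v) = sc (s ^ Suc k) ((U ^^ Suc k) (D v)) + sc ((s ^ Suc k - 1) * C) ((U ^^ k) v)"
proof (induct k arbitrary: v)
  case 0
  then show ?case using du by simp
next
  case (Suc k)
  have e1: "(U ^^ Suc (Suc k)) v = (U ^^ Suc k) (U v)" by (simp only: funpow_Suc_right[of "Suc k"] o_apply)
  have e2: "(U ^^ Suc k) (U x) = (U ^^ Suc (Suc k)) x" for x by (simp only: funpow_Suc_right[of "Suc k"] o_apply)
  have e3: "(U ^^ k) (U v) = (U ^^ Suc k) v" by (simp only: funpow_Suc_right o_apply)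
  have l: "lin sc (U ^^ Suc k)" by (rule lin_funpow[OF lU])
  have "D ((U ^^ Suc (Suc k)) v) = sc (s ^ Suc k) ((U ^^ Suc k) (D (U v))) + sc ((s ^ Suc k - 1) * C) ((U ^^ k) (U v))"
    unfolding e1 by (rule Suc)
  also have "(U ^^ Suc k) (D (U v)) = sc s ((U ^^ Suc (Suc k)) (D v)) + sc ((s - 1) * C) ((U ^^ Suc k) v)"
    unfolding du lin_add[OF l] lin_sc[OF l] e2 by (rule refl)
  finally have "D ((U ^^ Suc (Suc k)) v) = sc (s ^ Suc (Suc k)) ((U ^^ Suc (Suc k)) (D v)) +
     (sc (s ^ Suc k * ((s - 1) * C)) ((U ^^ Suc k) v) + sc ((s ^ Suc k - 1) * C) ((U ^^ Suc k) v))"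
    by (simp add: e3 scale_right_distrib mult.commute add.assoc)
  also have "sc (s ^ Suc k * ((s - 1) * C)) ((U ^^ Suc k) v) + sc ((s ^ Suc k - 1) * C) ((U ^^ Suc k) v)
      = sc ((s ^ Suc (Suc k) - 1) * C) ((U ^^ Suc k) v)"
  proof -
    have "s ^ Suc k * ((s - 1) * C) + (s ^ Suc k - 1) * C = (s ^ Suc (Suc k) - 1) * C"
      by (simp add: algebra_simps)
    thus ?thesis by (metis scale_left_distrib)
  qed
  finally show ?case .
qed

lemma DUn: "D ((U ^^ n) v) = (U ^^ n) (D v)"
proof -
  obtain m where m: "n = Suc m" using npos by (cases n) auto
  show ?thesis using DUk[of m v] sn unfolding m by simp
qed

lemma UkH: "(U ^^ k) (Hh v) = Hh ((U ^^ k) v) - sc (of_nat k * \<gamma>) ((U ^^ k) v)"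
proof (induct k)
  case 0 then show ?case by simp
next
  case (Suc k)
  define w where "w = (U ^^ k) v"
  have h: "U (Hh x) = Hh (U x) - sc \<gamma> (U x)" for x using hu[of x] by (simp add: algebra_simps)
  have "(U ^^ Suc k) (Hh v) = U (Hh w - sc (of_nat k * \<gamma>) w)" using Suc by (simp add: w_def)
  also have "\<dots> = Hh (U w) - sc \<gamma> (U w) - sc (of_nat k * \<gamma>) (U w)"
    using lU by (simp add: lin_diff lin_sc h)
  also have "\<dots> = Hh (U w) - sc (of_nat (Suc k) * \<gamma>) (U w)"
  proof -
    have "\<gamma> + of_nat k * \<gamma> = of_nat (Suc k) * \<gamma>" by (simp add: algebra_simps)
    thus ?thesis by (metis diff_diff_eq scale_left_distrib)
  qed
  finally show ?case by (simp add: w_def)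
qed

lemma K_cases: "(\<forall>v. (U ^^ n) v = 0) \<or> (\<forall>v. (U ^^ n) v = 0 \<longrightarrow> v = 0)"
proof -
  let ?K = "{v. (U ^^ n) v = 0}"
  have l: "lin sc (U ^^ n)" by (rule lin_funpow[OF lU])
  have sub: "subspace ?K" unfolding subspace_def using l by (simp add: lin_zero lin_add lin_sc)
  have iU: "U ` ?K \<subseteq> ?K"
  proof
    fix x assume "x \<in> U ` ?K"
    then obtain v where "x = U v" "(U ^^ n) v = 0" by auto
    then have "(U ^^ n) x = U ((U ^^ n) v)" by (metis funpow_swap1)
    then show "x \<in> ?K" using lin_zero[OF lU] \<open>(U ^^ n) v = 0\<close> by simp
  qed
  have iD: "D ` ?K \<subseteq> ?K"
  proof
    fix x assume "x \<in> D ` ?K"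
    then obtain v where "x = D v" "(U ^^ n) v = 0" by auto
    then show "x \<in> ?K" using lin_zero[OF lD] DUn[of v] by simp
  qed
  have iH: "Hh ` ?K \<subseteq> ?K"
  proof
    fix x assume "x \<in> Hh ` ?K"
    then obtain v where "x = Hh v" "(U ^^ n) v = 0" by auto
    then show "x \<in> ?K" using lin_zero[OF lH] UkH[of n v] by simp
  qed
  from simple[OF sub iU iD iH] show ?thesis by auto
qed


lemma DHop: "D (Hop v) = sc s (Hop (D v))"
proof -
  have "D (Hop v) = D (U (D v)) + sc C (D v)" unfolding Hop_def using lD by (simp add: lin_add lin_sc)
  also have "\<dots> = sc s (U (D (D v))) + (sc ((s - 1) * C) (D v) + sc C (D v))" by (simp add: du add.assoc)
  also have "sc ((s - 1) * C) (D v) + sc C (D v) = sc (s * C) (D v)"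
    by (metis (no_types, lifting) diff_add_cancel left_diff_distrib mult_1 scale_left_distrib)
  finally show ?thesis by (simp add: Hop_def scale_right_distrib)
qed

lemma eig_D: assumes "Hop w = sc lam w" shows "Hop ((D ^^ m) w) = sc (lam * inverse s ^ m) ((D ^^ m) w)"
proof (induct m)
  case 0 then show ?case using assms by simp
next
  case (Suc m)
  define x where "x = (D ^^ m) w"
  have "sc s (Hop (D x)) = sc (lam * inverse s ^ m) (D x)"
    using DHop[of x] Suc lin_sc[OF lD] by (simp add: x_def)
  then have "sc (inverse s) (sc s (Hop (D x))) = sc (inverse s) (sc (lam * inverse s ^ m) (D x))" by simp
  then have "Hop (D x) = sc (lam * inverse s ^ Suc m) (D x)" using s_nz by (simp add: ac_simps)
  then show ?case by (simp add: x_def)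
qed

lemma UD_eig: assumes "Hop w = sc lam w"
  shows "(U ^^ m) ((D ^^ m) w) = sc (\<Prod>j<m. lam * inverse s ^ j - C) w"
proof (induct m)
  case 0 then show ?case by simp
next
  case (Suc m)
  define x where "x = (D ^^ m) w"
  have "U (D x) = sc (lam * inverse s ^ m - C) x"
    using eig_D[OF assms, of m] unfolding Hop_def x_def[symmetric]
    by (simp add: scale_left_diff_distrib eq_diff_eq)
  then have "(U ^^ Suc m) ((D ^^ Suc m) w) = (U ^^ m) (sc (lam * inverse s ^ m - C) x)"
    by (simp add: x_def funpow_swap1)
  also have "\<dots> = sc (lam * inverse s ^ m - C) ((U ^^ m) x)" by (rule lin_sc[OF lin_funpow[OF lU]])
  also have "\<dots> = sc (\<Prod>j<Suc m. lam * inverse s ^ j - C) w" using Suc by (simp add: x_def mult.commute)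
  finally show ?case .
qed

lemma Dn_eig: assumes "k < n" "Hop w = sc (s ^ k * C) w" and inj: "\<forall>v. (U ^^ n) v = 0 \<longrightarrow> v = 0"
  shows "(D ^^ n) w = 0"
proof -
  have "(\<Prod>j<n. s ^ k * C * inverse s ^ j - C) = 0"
    using assms(1) s_nz by (intro prod_zero) (auto intro!: bexI[of _ k] simp: power_inverse)
  then have "(U ^^ n) ((D ^^ n) w) = 0" using UD_eig[OF assms(2), of n] by simp
  then show ?thesis using inj by blast
qed


definition wk where "wk v k = (\<Sum>j<n. sc (inverse (s ^ k * C) ^ j) ((Hop ^^ j) v))"

lemma wk_eig: "Hop (wk v k) = sc (s ^ k * C) (wk v k)"
proof -
  define a where "a = inverse (s ^ k * C)"
  define f where "f j = sc (a ^ j) ((Hop ^^ j) v)" for j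
  have b: "s ^ k * C * a = 1" using s_nz C_nz unfolding a_def by (simp add: field_simps)
  have "sc a (Hop (wk v k)) = (\<Sum>j<n. f (Suc j))"
    unfolding wk_def lin_sum[OF lHop] lin_sc[OF lHop] scale_sum_right f_def a_def
    by (simp add: funpow_swap1[symmetric] mult.commute)
  also have "\<dots> = (\<Sum>j<n. f j)"
  proof -
    have ac: "a * C = inverse s ^ k" using C_nz s_nz unfolding a_def by (simp add: field_simps power_inverse)
    have "(a * C) ^ n = (inverse s ^ n) ^ k" unfolding ac by (simp add: power_mult[symmetric] mult.commute)
    then have "(a * C) ^ n = 1" using sn by (simp add: power_inverse)
    then have "f n = f 0" by (simp add: f_def Hn power_mult_distrib)
    moreover have "(\<Sum>j<Suc n. f j) = f 0 + (\<Sum>j<n. f (Suc j))" by (rule sum.lessThan_Suc_shift)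
    moreover have "(\<Sum>j<Suc n. f j) = (\<Sum>j<n. f j) + f n" by simp
    ultimately show ?thesis by (metis add.commute add_left_cancel)
  qed
  also have "\<dots> = wk v k" by (simp add: f_def wk_def a_def)
  finally have "sc (s ^ k * C) (sc a (Hop (wk v k))) = sc (s ^ k * C) (wk v k)" by simp
  then show ?thesis using b by simp
qed

lemma coef: assumes "j < n"
  shows "(\<Sum>k<n. inverse (s ^ k * C) ^ j) = (if j = 0 then of_nat n else 0)"
proof -
  define z where "z = inverse s ^ j"
  have "(\<Sum>k<n. inverse (s ^ k * C) ^ j) = inverse C ^ j * (\<Sum>k<n. z ^ k)"
    by (simp add: sum_distrib_left z_def power_mult_distrib power_inverse power_mult[symmetric] mult.commute)
  also have "\<dots> = (if j = 0 then of_nat n else 0)"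
  proof (cases "j = 0")
    case True then show ?thesis by (simp add: z_def)
  next
    case False
    have "z \<noteq> 1" using ord[of j] False assms s_nz by (simp add: z_def power_inverse)
    moreover have "z ^ n = 1" using sn by (simp add: z_def power_inverse power_mult[symmetric] mult.commute[of j] power_mult)
    ultimately show ?thesis using False by (simp add: sum_gp_strict)
  qed
  finally show ?thesis .
qed

lemma sum_wk: "(\<Sum>k<n. wk v k) = sc (of_nat n) v"
proof -
  have "(\<Sum>k<n. wk v k) = (\<Sum>j<n. \<Sum>k<n. sc (inverse (s ^ k * C) ^ j) ((Hop ^^ j) v))"
    unfolding wk_def by (rule sum.swap)
  also have "\<dots> = (\<Sum>j<n. sc (\<Sum>k<n. inverse (s ^ k * C) ^ j) ((Hop ^^ j) v))"
    by (simp add: scale_sum_left)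
  also have "\<dots> = (\<Sum>j<n. if j = 0 then sc (of_nat n) v else 0)"
  proof (rule sum.cong)
    fix j assume "j \<in> {..<n}"
    then have "(\<Sum>k<n. inverse (s ^ k * C) ^ j) = (if j = 0 then of_nat n else 0)" by (intro coef) simp
    then show "sc (\<Sum>k<n. inverse (s ^ k * C) ^ j) ((Hop ^^ j) v) = (if j = 0 then sc (of_nat n) v else 0)"
      by simp
  qed simp
  also have "\<dots> = sc (of_nat n) v" using npos by simp
  finally show ?thesis .
qed

lemma Dn_zero: assumes inj: "\<forall>v. (U ^^ n) v = 0 \<longrightarrow> v = 0" shows "(D ^^ n) v = 0"
proof -
  have l: "lin sc (D ^^ n)" by (rule lin_funpow[OF lD])
  have "(D ^^ n) (sc (of_nat n) v) = (\<Sum>k<n. (D ^^ n) (wk v k))"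
    unfolding sum_wk[symmetric] by (rule lin_sum[OF l])
  also have "\<dots> = 0" using Dn_eig[OF _ wk_eig inj] by simp
  finally show ?thesis using npos by (simp add: lin_sc[OF l])
qed

lemma result: "(U ^^ n) = (\<lambda>v. 0) \<or> (D ^^ n) = (\<lambda>v. 0)"
  using K_cases Dn_zero by auto

end

theorem mainTheorem7:
  fixes sc :: "complex \<Rightarrow> 'v \<Rightarrow> 'v::ab_group_add"
    and phi psi :: "complex poly" and s \<gamma> C :: complex and n :: nat
    and U D Hh :: "'v \<Rightarrow> 'v"
  assumes "s \<noteq> 0" and "\<gamma> \<noteq> 0"
    and "\<forall>x. s * poly psi x - poly psi (x + \<gamma>) = poly phi x"
    and "mult_order_is s n"
    and "psi = [:C:]" and "C \<noteq> 0"
    and "simple_L_module sc phi s \<gamma> U D Hh"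
    and "((\<lambda>v. U (D v) + op_poly sc psi Hh v) ^^ n) = (\<lambda>v. sc (C ^ n) v)"
  shows "(U ^^ n) = (\<lambda>v. 0) \<or> (D ^^ n) = (\<lambda>v. 0)"
proof -
  have opc: "op_poly sc [:c:] T v = sc c v" for c T v by (simp add: op_poly_def)
  have "poly phi = poly [:(s - 1) * C:]"
    using assms(3) unfolding assms(5) by (auto simp: algebra_simps)
  then have phi: "phi = [:(s - 1) * C:]" by (simp add: poly_eq_poly_eq_iff)
  from assms(7) have LM: "L_module sc phi s \<gamma> U D Hh" and
    simp: "\<And>W. module.subspace sc W \<Longrightarrow> U ` W \<subseteq> W \<Longrightarrow> D ` W \<subseteq> W \<Longrightarrow> Hh ` W \<subseteq> W
          \<Longrightarrow> W = {0} \<or> W = UNIV"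
    unfolding simple_L_module_def by blast+
  from LM have vs: "vector_space sc" and lU: "Vector_Spaces.linear sc sc U"
    and lD: "Vector_Spaces.linear sc sc D" and lH: "Vector_Spaces.linear sc sc Hh"
    and hu: "\<And>v. Hh (U v) - U (Hh v) = sc \<gamma> (U v)"
    and du0: "\<And>v. D (U v) - sc s (U (D v)) = op_poly sc phi Hh v"
    unfolding L_module_def by blast+
  have lin: "lin sc f" if "Vector_Spaces.linear sc sc f" for f
    using that by (simp add: Vector_Spaces.linear_iff lin_def)
  have du: "D (U v) = sc s (U (D v)) + sc ((s - 1) * C) v" for v
    using du0[of v] unfolding phi opc by (metis diff_eq_eq add.commute)
  have psi: "(\<lambda>v. U (D v) + op_poly sc psi Hh v) = (\<lambda>v. U (D v) + sc C v)"
    unfolding assms(5) opc by simp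
  have Hn0: "((\<lambda>v. U (D v) + sc C v) ^^ n) v = sc (C ^ n) v" for v
    using assms(8) unfolding psi by simp
  from assms(4) have npos: "0 < n" and sn: "s ^ n = 1" and ord: "\<And>k. 0 < k \<Longrightarrow> k < n \<Longrightarrow> s ^ k \<noteq> 1"
    unfolding mult_order_is_def by auto
  interpret Lm sc U D Hh s \<gamma> C n
    by (rule Lm.intro[OF vs], unfold_locales)
      (use lin[OF lU] lin[OF lD] lin[OF lH] hu du assms(1) assms(6) npos sn ord Hn0 simp in auto)
  show ?thesis by (rule result)
qed

end
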